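(* Let $d\in\mathbb N$, $1\le p<\infty$, $\alpha_1,\dots,\alpha_d\in\mathbb R$, and for each $i$ let $q_i=q_i(n)=p+\frac{\alpha_i+\varepsilon_i(n)}{\log n}$ where $\varepsilon_i(n)\to0$ as $n\to\infty$ and $q_i(n)\ge1$ for all $n\ge2$. Let $s_1,\dots,s_d\ge0$ and $I_\star=\{i:s_i\star e^{-\alpha_i/p^2}\}$ for $\star\in\{<,>\}$. Then, as $n\to\infty$, \[ \frac{\mathrm{vol}_n(\mathbb B_p^n\cap s_1\mathbb B_{q_1}^n\cap\dots\cap s_d\mathbb B_{q_d}^n)}{\mathrm{vol}_n(\mathbb B_p^n)}\to\begin{cases}1 & |I_>|=d,\\ 0 & |I_<|\ge1.\end{cases} \]
   Context: $\mathbb B_s^n=\{x\in\mathbb R^n:\|x\|_s\le1\}$ with $\|x\|_s=(\sum_i|x_i|^s)^{1/s}$; $\mathrm{vol}_n$ is Lebesgue measure. *)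

theory Defs
  imports "HOL-Analysis.Analysis"
begin

text \<open>Points of R^n are represented as extensional functions on the index set {..<n}
  (the carrier of the product measure lebesgue_n n below).\<close>

definition lpnorm :: "nat \<Rightarrow> real \<Rightarrow> (nat \<Rightarrow> real) \<Rightarrow> real" where
  "lpnorm n s x = (\<Sum>i<n. \<bar>x i\<bar> powr s) powr (1 / s)"

definition lpball :: "nat \<Rightarrow> real \<Rightarrow> (nat \<Rightarrow> real) set" where
  "lpball n s = {x \<in> PiE {..<n} (\<lambda>_. UNIV). lpnorm n s x \<le> 1}"

definition scale_set :: "nat \<Rightarrow> real \<Rightarrow> (nat \<Rightarrow> real) set \<Rightarrow> (nat \<Rightarrow> real) set" where
  "scale_set n t A = (\<lambda>x. \<lambda>i\<in>{..<n}. t * x i) ` A"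

abbreviation lebesgue_n :: "nat \<Rightarrow> (nat \<Rightarrow> real) measure" where
  "lebesgue_n n \<equiv> PiM {..<n} (\<lambda>_. lborel)"

definition voln :: "nat \<Rightarrow> (nat \<Rightarrow> real) set \<Rightarrow> real" where
  "voln n A = measure (lebesgue_n n) A"

end

theory Submission
  imports Defs "HOL-Real_Asymp.Real_Asymp"
begin
lemma lborel_scale_pre:
  fixes c :: real assumes "c > 0" and A: "A \<in> sets borel"
  shows "emeasure lborel A = ennreal c * emeasure lborel {y. c * y \<in> A}"
proof -
  have "emeasure lborel A = emeasure (density (distr lborel borel ((*) c)) (\<lambda>_. ennreal \<bar>c\<bar>)) A"
    using lborel_distr_mult'[of c] assms by simp
  also have "\<dots> = ennreal c * emeasure (distr lborel borel ((*) c)) A"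
    using assms by (subst emeasure_density_const) auto
  also have "emeasure (distr lborel borel ((*) c)) A = emeasure lborel ((*) c -` A \<inter> space lborel)"
    using A by (subst emeasure_distr) auto
  also have "(*) c -` A \<inter> space lborel = {y. c * y \<in> A}" by auto
  finally show ?thesis .
qed

lemma scale_PiM:
  fixes c :: "nat \<Rightarrow> real"
  assumes c: "\<And>i. i < n \<Longrightarrow> c i > 0" and A: "A \<in> sets (lebesgue_n n)"
  shows "emeasure (lebesgue_n n) A = ennreal (\<Prod>i<n. c i) *
     emeasure (lebesgue_n n) {x \<in> space (lebesgue_n n). (\<lambda>i\<in>{..<n}. c i * x i) \<in> A}"
proof -
  define D where "D = (\<lambda>x::nat\<Rightarrow>real. \<lambda>i\<in>{..<n}. c i * x i)"
  define K where "K = ennreal (\<Prod>i<n. c i)"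
  have Dm: "D \<in> measurable (lebesgue_n n) (lebesgue_n n)"
    unfolding D_def by measurable
  interpret ps: product_sigma_finite "\<lambda>_::nat. lborel :: real measure" by standard
  have eq: "density (distr (lebesgue_n n) (lebesgue_n n) D) (\<lambda>_. K) = lebesgue_n n"
  proof (rule ps.PiM_eqI)
    show "finite {..<n}" by simp
    show "sets (density (distr (lebesgue_n n) (lebesgue_n n) D) (\<lambda>_. K)) = sets (lebesgue_n n)" by simp
    fix B :: "nat \<Rightarrow> real set" assume B: "\<And>i. i \<in> {..<n} \<Longrightarrow> B i \<in> sets lborel"
    have PB: "Pi\<^sub>E {..<n} B \<in> sets (lebesgue_n n)"
      using B by (intro sets_PiM_I_finite) auto
    have pre: "D -` Pi\<^sub>E {..<n} B \<inter> space (lebesgue_n n) = Pi\<^sub>E {..<n} (\<lambda>i. {y. c i * y \<in> B i})"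
      by (auto simp: D_def space_PiM PiE_def Pi_def extensional_def)
    have Bm: "{y. c i * y \<in> B i} \<in> sets lborel" if "i < n" for i
    proof -
      have "{y. c i * y \<in> B i} = (\<lambda>y. c i * y) -` B i \<inter> space lborel" by auto
      also have "\<dots> \<in> sets lborel" using B that by (intro measurable_sets[of _ lborel lborel]) auto
      finally show ?thesis .
    qed
    have "emeasure (density (distr (lebesgue_n n) (lebesgue_n n) D) (\<lambda>_. K)) (Pi\<^sub>E {..<n} B)
        = K * emeasure (distr (lebesgue_n n) (lebesgue_n n) D) (Pi\<^sub>E {..<n} B)"
      using PB by (subst emeasure_density_const) auto
    also have "\<dots> = K * emeasure (lebesgue_n n) (Pi\<^sub>E {..<n} (\<lambda>i. {y. c i * y \<in> B i}))"
      using PB Dm by (subst emeasure_distr) (auto simp: pre)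
    also have "\<dots> = K * (\<Prod>i<n. emeasure lborel {y. c i * y \<in> B i})"
      using Bm by (subst ps.emeasure_PiM) auto
    also have "\<dots> = (\<Prod>i<n. ennreal (c i) * emeasure lborel {y. c i * y \<in> B i})"
    proof -
      have "ennreal (\<Prod>i<n. c i) = (\<Prod>i<n. ennreal (c i))"
        using c by (intro prod_ennreal[symmetric]) (auto intro: less_imp_le)
      then show ?thesis unfolding K_def by (simp add: prod.distrib)
    qed
    also have "\<dots> = (\<Prod>i<n. emeasure lborel (B i))"
      using B c by (intro prod.cong refl lborel_scale_pre[symmetric]) auto
    finally show "emeasure (density (distr (lebesgue_n n) (lebesgue_n n) D) (\<lambda>_. K)) (Pi\<^sub>E {..<n} B) = (\<Prod>i\<in>{..<n}. emeasure lborel (B i))" by simp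
  qed
  have "emeasure (lebesgue_n n) A = emeasure (density (distr (lebesgue_n n) (lebesgue_n n) D) (\<lambda>_. K)) A"
    by (simp add: eq)
  also have "\<dots> = K * emeasure (distr (lebesgue_n n) (lebesgue_n n) D) A"
    using A by (subst emeasure_density_const) auto
  also have "\<dots> = K * emeasure (lebesgue_n n) (D -` A \<inter> space (lebesgue_n n))"
    using A Dm by (subst emeasure_distr) auto
  also have "D -` A \<inter> space (lebesgue_n n) = {x \<in> space (lebesgue_n n). D x \<in> A}" by auto
  finally show ?thesis unfolding K_def D_def .
qed

definition psum :: "nat \<Rightarrow> real \<Rightarrow> (nat\<Rightarrow>real) \<Rightarrow> real" where
  "psum n r x = (\<Sum>i<n. \<bar>x i\<bar> powr r)"

lemma space_leb: "space (lebesgue_n n) = PiE {..<n} (\<lambda>_. UNIV)"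
  by (simp add: space_PiM)

lemma psum_meas[measurable]: "psum n r \<in> borel_measurable (lebesgue_n n)"
  unfolding psum_def by measurable

lemma psum_nonneg: "psum n r x \<ge> 0"
  unfolding psum_def by (auto intro!: sum_nonneg)

lemma psum_restrict[simp]: "psum n r (restrict f {..<n}) = psum n r f"
  unfolding psum_def by simp

lemma psum_scale: "psum n r (\<lambda>i. t * y i) = \<bar>t\<bar> powr r * psum n r y"
  unfolding psum_def by (simp add: abs_mult powr_mult sum_distrib_left)

lemma powr_le_one_iff: "0 \<le> (x::real) \<Longrightarrow> e > 0 \<Longrightarrow> x powr e \<le> 1 \<longleftrightarrow> x \<le> 1"
proof -
  assume a: "0 \<le> x" "e > 0"
  show ?thesis
  proof
    assume "x powr e \<le> 1"
    then show "x \<le> 1" using powr_less_mono2[of e 1 x] a by (metis not_le powr_one_eq_one zero_le_one)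
  next
    assume "x \<le> 1" then show "x powr e \<le> 1" using powr_mono2[of e x 1] a by simp
  qed
qed

lemma lpball_eq: "r > 0 \<Longrightarrow> lpball n r = {x \<in> space (lebesgue_n n). psum n r x \<le> 1}"
  unfolding lpball_def lpnorm_def space_leb psum_def[symmetric]
  using psum_nonneg by (auto simp: powr_le_one_iff)

lemma lpball_sets: "r > 0 \<Longrightarrow> lpball n r \<in> sets (lebesgue_n n)"
  by (simp add: lpball_eq)

lemma scale_mem:
  assumes "0 \<le> t" "r > 0" "x \<in> scale_set n t (lpball n r)"
  shows "x \<in> space (lebesgue_n n) \<and> psum n r x \<le> t powr r"
proof -
  obtain y where y: "y \<in> lpball n r" and x: "x = (\<lambda>i\<in>{..<n}. t * y i)"
    using assms(3) unfolding scale_set_def by auto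
  have "psum n r y \<le> 1" using y assms by (simp add: lpball_eq)
  then have "psum n r x \<le> t powr r * 1"
    using assms x by (simp add: psum_scale mult_left_le)
  moreover have "x \<in> space (lebesgue_n n)" using x by (simp add: space_leb)
  ultimately show ?thesis by simp
qed

lemma scale_eq:
  assumes "0 < t" "r > 0"
  shows "scale_set n t (lpball n r) = {x \<in> space (lebesgue_n n). psum n r x \<le> t powr r}"
proof
  show "scale_set n t (lpball n r) \<subseteq> {x \<in> space (lebesgue_n n). psum n r x \<le> t powr r}"
    using scale_mem[of t r _ n] assms by auto
  show "{x \<in> space (lebesgue_n n). psum n r x \<le> t powr r} \<subseteq> scale_set n t (lpball n r)"
  proof
    fix x assume x: "x \<in> {x \<in> space (lebesgue_n n). psum n r x \<le> t powr r}"
    define y where "y = (\<lambda>i\<in>{..<n}. x i / t)"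
    have "psum n r y = psum n r (\<lambda>i. (1/t) * x i)" unfolding y_def
      by (simp add: psum_def)
    also have "\<dots> = (1/t) powr r * psum n r x" using assms by (subst psum_scale) simp
    also have "\<dots> \<le> (1/t) powr r * t powr r" using x by (intro mult_left_mono) auto
    also have "\<dots> = 1" using assms by (simp add: powr_divide)
    finally have "y \<in> lpball n r" using assms by (simp add: lpball_eq y_def space_leb)
    moreover have "x = (\<lambda>i\<in>{..<n}. t * y i)"
      using x assms by (auto simp: y_def space_leb PiE_def extensional_def)
    ultimately show "x \<in> scale_set n t (lpball n r)" unfolding scale_set_def by blast
  qed
qed

lemma young1: "0 \<le> (w::real) \<Longrightarrow> 0 < \<theta> \<Longrightarrow> \<theta> \<le> 1 \<Longrightarrow> w powr \<theta> \<le> \<theta> * w + (1 - \<theta>)"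
proof (cases "w = 0")
  case False
  assume a: "0 \<le> w" "0 < \<theta>" "\<theta> \<le> 1"
  then have "w powr \<theta> * 1 powr (1-\<theta>) \<le> \<theta> * w + (1-\<theta>) * 1"
    using False by (intro Youngs_inequality_0) auto
  then show ?thesis by simp
qed simp

lemma power_mean:
  fixes y :: "'a \<Rightarrow> real"
  assumes fin: "finite I" and N: "card I > 0" and ab: "0 < a" "a \<le> b" and y: "\<And>i. i \<in> I \<Longrightarrow> y i \<ge> 0"
  shows "(\<Sum>i\<in>I. y i powr a) \<le> real (card I) powr (1 - a/b) * (\<Sum>i\<in>I. y i powr b) powr (a/b)"
proof -
  define T where "T = (\<Sum>i\<in>I. y i powr b)"
  define N where "N = real (card I)"
  define \<theta> where "\<theta> = a / b"
  have th: "0 < \<theta>" "\<theta> \<le> 1" using ab by (auto simp: \<theta>_def)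
  have Npos: "N > 0" using N by (simp add: N_def)
  have T0: "T \<ge> 0" unfolding T_def by (auto intro!: sum_nonneg)
  show ?thesis
  proof (cases "T = 0")
    case True
    then have "\<forall>i\<in>I. y i powr b = 0" using fin unfolding T_def by (subst (asm) sum_nonneg_eq_0_iff) auto
    then have "\<forall>i\<in>I. y i = 0" using y by auto
    then show ?thesis by simp
  next
    case False
    then have Tp: "T > 0" using T0 by simp
    define w where "w i = N * y i powr b / T" for i
    have w0: "w i \<ge> 0" for i unfolding w_def using Npos Tp by auto
    have sw: "(\<Sum>i\<in>I. w i) = N"
      unfolding w_def using Tp by (simp add: sum_divide_distrib[symmetric] sum_distrib_left[symmetric] T_def[symmetric])
    have tm: "y i powr a \<le> (T/N) powr \<theta> * (\<theta> * w i + (1 - \<theta>))" if i: "i \<in> I" for i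
    proof -
      have "y i powr a = (y i powr b) powr \<theta>" using ab by (simp add: powr_powr \<theta>_def)
      also have "y i powr b = (T/N) * w i" unfolding w_def using Npos Tp by simp
      also have "((T/N) * w i) powr \<theta> = (T/N) powr \<theta> * w i powr \<theta>"
        using Npos Tp w0 by (subst powr_mult) auto
      also have "\<dots> \<le> (T/N) powr \<theta> * (\<theta> * w i + (1 - \<theta>))"
        using young1[OF w0 th] by (intro mult_left_mono) auto
      finally show ?thesis .
    qed
    have "(\<Sum>i\<in>I. y i powr a) \<le> (\<Sum>i\<in>I. (T/N) powr \<theta> * (\<theta> * w i + (1 - \<theta>)))"
      using tm by (intro sum_mono) auto
    also have "\<dots> = (T/N) powr \<theta> * (\<theta> * N + (1 - \<theta>) * N)"
      by (simp add: sum_distrib_left[symmetric] sum.distrib sum_distrib_left[of \<theta>, symmetric] sw N_def)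
    also have "\<dots> = N powr (1 - \<theta>) * T powr \<theta>"
      using Npos Tp by (simp add: powr_divide powr_diff algebra_simps)
    finally show ?thesis unfolding N_def T_def \<theta>_def .
  qed
qed

lemma emeasure_box_fin:
  "emeasure (lebesgue_n n) (Pi\<^sub>E {..<n} (\<lambda>_. {a..b::real})) = ennreal ((max 0 (b - a)) ^ n)"
proof -
  interpret ps: product_sigma_finite "\<lambda>_::nat. lborel :: real measure" by standard
  have "emeasure (lebesgue_n n) (Pi\<^sub>E {..<n} (\<lambda>_. {a..b::real})) = (\<Prod>i<n. emeasure lborel {a..b})"
    by (subst ps.emeasure_PiM) auto
  also have "\<dots> = (\<Prod>i<n. ennreal (max 0 (b - a)))"
    by (intro prod.cong) (auto simp: max_def)
  also have "\<dots> = ennreal ((max 0 (b - a)) ^ n)"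
    by (simp add: ennreal_power)
  finally show ?thesis .
qed

lemma lpball_sub_box: "1 \<le> p \<Longrightarrow> lpball n p \<subseteq> Pi\<^sub>E {..<n} (\<lambda>_. {-1..1::real})"
proof
  fix x assume p: "1 \<le> p" and x: "x \<in> lpball n p"
  then have xs: "x \<in> space (lebesgue_n n)" and ps: "psum n p x \<le> 1" by (auto simp: lpball_eq)
  have "\<bar>x i\<bar> \<le> 1" if "i < n" for i
  proof -
    have "\<bar>x i\<bar> powr p \<le> psum n p x" unfolding psum_def
      using that by (intro member_le_sum) auto
    then have "\<bar>x i\<bar> powr p \<le> 1" using ps by simp
    then show ?thesis using p by (subst (asm) powr_le_one_iff) auto
  qed
  then show "x \<in> Pi\<^sub>E {..<n} (\<lambda>_. {-1..1})" using xs by (auto simp: space_leb PiE_def abs_le_iff)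
qed

lemma lpball_fmeas: "1 \<le> p \<Longrightarrow> lpball n p \<in> fmeasurable (lebesgue_n n)"
proof -
  assume p: "1 \<le> p"
  have "emeasure (lebesgue_n n) (lpball n p) \<le> emeasure (lebesgue_n n) (Pi\<^sub>E {..<n} (\<lambda>_. {-1..1::real}))"
    using p lpball_sub_box[OF p] by (intro emeasure_mono) (auto intro!: sets_PiM_I_finite)
  also have "\<dots> < \<infinity>" by (simp add: emeasure_box_fin)
  finally show ?thesis using p lpball_sets[of p n] by (auto simp: fmeasurable_def)
qed

lemma lpball_pos: "1 \<le> p \<Longrightarrow> 0 < measure (lebesgue_n n) (lpball n p)"
proof -
  assume p: "1 \<le> p"
  define e where "e = 1 / real (Suc n)"
  have e: "0 < e" "e \<le> 1" by (auto simp: e_def)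
  have sub: "Pi\<^sub>E {..<n} (\<lambda>_. {-e..e}) \<subseteq> lpball n p"
  proof
    fix x assume x: "x \<in> Pi\<^sub>E {..<n} (\<lambda>_. {-e..e})"
    have "psum n p x \<le> (\<Sum>i<n. e)" unfolding psum_def
    proof (intro sum_mono)
      fix i assume "i \<in> {..<n}"
      then have "x i \<in> {-e..e}" using x by (auto simp: PiE_def Pi_def)
      then have "\<bar>x i\<bar> \<le> e" by auto
      then have "\<bar>x i\<bar> powr p \<le> e powr p" using p by (intro powr_mono2) auto
      also have "\<dots> \<le> e powr 1" using e p by (intro powr_mono') auto
      finally show "\<bar>x i\<bar> powr p \<le> e" using e by simp
    qed
    also have "\<dots> \<le> 1" by (simp add: e_def field_simps)
    finally show "x \<in> lpball n p" using x p by (auto simp: lpball_eq space_leb PiE_def)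
  qed
  have "0 < emeasure (lebesgue_n n) (Pi\<^sub>E {..<n} (\<lambda>_. {-e..e}))"
    using e by (simp add: emeasure_box_fin)
  also have "\<dots> \<le> emeasure (lebesgue_n n) (lpball n p)"
    using sub p by (intro emeasure_mono lpball_sets) auto
  finally have "0 < emeasure (lebesgue_n n) (lpball n p)" .
  then show ?thesis using lpball_fmeas[OF p]
    by (simp add: emeasure_eq_measure2)
qed

lemma meas_le:
  assumes "emeasure M A \<le> ennreal c * emeasure M B" "B \<in> fmeasurable M" "0 \<le> c"
  shows "measure M A \<le> c * measure M B"
proof -
  have "emeasure M A \<le> ennreal (c * measure M B)"
    using assms by (simp add: emeasure_eq_measure2 ennreal_mult)
  then show ?thesis unfolding measure_def
    using assms by (intro enn2real_leI) auto
qed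

lemma scale_inv:
  fixes c :: "nat \<Rightarrow> real"
  assumes c: "\<And>i. i < n \<Longrightarrow> c i > 0" and A: "A \<in> sets (lebesgue_n n)"
  shows "emeasure (lebesgue_n n) {x \<in> space (lebesgue_n n). (\<lambda>i\<in>{..<n}. c i * x i) \<in> A}
     = ennreal (1 / (\<Prod>i<n. c i)) * emeasure (lebesgue_n n) A"
proof -
  have P: "(\<Prod>i<n. c i) > 0" using c by (intro prod_pos) auto
  have "ennreal (1 / (\<Prod>i<n. c i)) * emeasure (lebesgue_n n) A =
        ennreal (1 / (\<Prod>i<n. c i)) * ennreal (\<Prod>i<n. c i) * emeasure (lebesgue_n n) {x \<in> space (lebesgue_n n). (\<lambda>i\<in>{..<n}. c i * x i) \<in> A}"
    by (subst scale_PiM[OF c A]) (auto simp: mult.assoc)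
  also have "ennreal (1 / (\<Prod>i<n. c i)) * ennreal (\<Prod>i<n. c i) = 1"
  proof -
    obtain Q where Q: "Q = (\<Prod>i<n. c i)" "Q > 0" using P by blast
    have "1 / Q * Q = 1" using Q(2) by simp
    then show ?thesis using Q(2) unfolding Q(1)[symmetric] by (subst ennreal_mult[symmetric]) (auto simp: less_imp_le)
  qed
  finally have "ennreal (1 / (\<Prod>i<n. c i)) * emeasure (lebesgue_n n) A =
    1 * emeasure (lebesgue_n n) {x \<in> space (lebesgue_n n). (\<lambda>i\<in>{..<n}. c i * x i) \<in> A}" .
  then show ?thesis by (simp only: mult_1)
qed

lemma pre_sets:
  fixes c :: "nat \<Rightarrow> real"
  assumes "A \<in> sets (lebesgue_n n)"
  shows "{x \<in> space (lebesgue_n n). (\<lambda>i\<in>{..<n}. c i * x i) \<in> A} \<in> sets (lebesgue_n n)"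
proof -
  have m: "(\<lambda>x::nat\<Rightarrow>real. \<lambda>i\<in>{..<n}. c i * x i) \<in> measurable (lebesgue_n n) (lebesgue_n n)"
    by measurable
  have "{x \<in> space (lebesgue_n n). (\<lambda>i\<in>{..<n}. c i * x i) \<in> A} = (\<lambda>x. \<lambda>i\<in>{..<n}. c i * x i) -` A \<inter> space (lebesgue_n n)"
    by auto
  also have "\<dots> \<in> sets (lebesgue_n n)" using measurable_sets[OF m assms] .
  finally show ?thesis .
qed

lemma shrink_bound:
  assumes p: "1 \<le> p" and r: "0 < \<rho>"
  shows "measure (lebesgue_n n) {x \<in> lpball n p. psum n p x < \<rho> powr p} \<le> \<rho> ^ n * measure (lebesgue_n n) (lpball n p)"
proof -
  let ?M = "lebesgue_n n"
  let ?c = "\<lambda>i::nat. 1 / \<rho>"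
  have sub: "{x \<in> lpball n p. psum n p x < \<rho> powr p} \<subseteq> {x \<in> space ?M. (\<lambda>i\<in>{..<n}. ?c i * x i) \<in> lpball n p}"
  proof safe
    fix x assume x: "x \<in> lpball n p" "psum n p x < \<rho> powr p"
    then show "x \<in> space ?M" using p by (simp add: lpball_eq)
    have "psum n p (\<lambda>i\<in>{..<n}. ?c i * x i) = (1/\<rho>) powr p * psum n p x"
      using psum_scale[of n p "1/\<rho>" x] r by simp
    also have "\<dots> \<le> (1/\<rho>) powr p * \<rho> powr p" using x by (intro mult_left_mono) auto
    also have "\<dots> = 1" using r by (simp add: powr_divide)
    finally show "(\<lambda>i\<in>{..<n}. ?c i * x i) \<in> lpball n p" using p by (simp add: lpball_eq space_leb)
  qed
  have "emeasure ?M {x \<in> lpball n p. psum n p x < \<rho> powr p} \<le> emeasure ?M {x \<in> space ?M. (\<lambda>i\<in>{..<n}. ?c i * x i) \<in> lpball n p}"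
    using sub p by (intro emeasure_mono pre_sets lpball_sets) auto
  also have "\<dots> = ennreal (1 / (\<Prod>i<n. ?c i)) * emeasure ?M (lpball n p)"
    using r p by (intro scale_inv lpball_sets) auto
  also have "1 / (\<Prod>i<n. ?c i) = \<rho> ^ n" by (simp add: power_one_over)
  finally show ?thesis using p r by (intro meas_le lpball_fmeas) auto
qed

lemma prod_if_one: "j < n \<Longrightarrow> (\<Prod>i<n. if i = j then (a::real) else b) = a * b ^ (n - 1)"
proof -
  assume j: "j < n"
  have "(\<Prod>i<n. if i = j then a else b) = (if j = j then a else b) * (\<Prod>i\<in>{..<n}-{j}. if i = j then a else b)"
    using j by (subst prod.remove[of _ j]) auto
  also have "(\<Prod>i\<in>{..<n}-{j}. if i = j then a else b) = (\<Prod>i\<in>{..<n}-{j}. b)"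
    by (intro prod.cong) auto
  also have "\<dots> = b ^ (n - 1)" using j by simp
  finally show ?thesis by simp
qed

lemma psum_split: "j < n \<Longrightarrow> psum n p x = \<bar>x j\<bar> powr p + (\<Sum>i\<in>{..<n}-{j}. \<bar>x i\<bar> powr p)"
  unfolding psum_def by (subst sum.remove[of _ j]) auto

lemma psum_minus: "j < n \<Longrightarrow> psum n p x - \<bar>x j\<bar> powr p = (\<Sum>i\<in>{..<n}-{j}. \<bar>x i\<bar> powr p)"
  using psum_split[of j n p x] by simp

lemma powr_inv_p: "0 < (b::real) \<Longrightarrow> 0 < p \<Longrightarrow> (b powr (-1/p)) powr p = 1 / b"
proof -
  assume b: "0 < b" and p: "0 < p"
  have "(b powr (-1/p)) powr p = b powr (-1/p * p)" by (rule powr_powr)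
  also have "-1/p * p = -1" using p by simp
  also have "b powr (-1) = 1 / b" using b by (simp add: powr_minus_divide)
  finally show ?thesis .
qed

lemma tail_bound:
  assumes p: "1 \<le> p" and j: "j < n"
    and m: "0 < m" "m powr p < 1" and a: "0 < a" "a powr p < 1"
  shows "measure (lebesgue_n n) {x \<in> lpball n p. \<bar>x j\<bar> > m}
     \<le> (((1 - a powr p) powr (-1/p)) / ((1 - m powr p) powr (-1/p))) ^ (n - 1) / a
        * measure (lebesgue_n n) (lpball n p)"
proof -
  let ?M = "lebesgue_n n"
  define lam where "lam = (1 - m powr p) powr (-1/p)"
  define mu where "mu = (1 - a powr p) powr (-1/p)"
  have lam: "lam > 0" "lam powr p = 1 / (1 - m powr p)"
    using m p powr_inv_p[of "1 - m powr p" p] by (auto simp: lam_def)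
  have mu: "mu > 0" "mu powr p = 1 / (1 - a powr p)"
    using a p powr_inv_p[of "1 - a powr p" p] by (auto simp: mu_def)
  define Sj where "Sj = {y \<in> space ?M. \<bar>y j\<bar> \<le> 1 \<and> psum n p y - \<bar>y j\<bar> powr p \<le> 1}"
  have jm: "(\<lambda>x::nat\<Rightarrow>real. x j) \<in> borel_measurable ?M"
    apply measurable using j by simp
  have Sj_sets: "Sj \<in> sets ?M" unfolding Sj_def using jm by measurable
  have Sj_iff: "y \<in> Sj \<longleftrightarrow> y \<in> space ?M \<and> \<bar>y j\<bar> \<le> 1 \<and> (\<Sum>i\<in>{..<n}-{j}. \<bar>y i\<bar> powr p) \<le> 1" for y
    unfolding Sj_def psum_minus[OF j] by simp
  define c1 where "c1 i = (if i = j then 1 else lam)" for i :: nat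
  define c2 where "c2 i = (if i = j then 1 / a else mu)" for i :: nat
  have c1: "\<And>i. i < n \<Longrightarrow> c1 i > 0" using lam by (auto simp: c1_def)
  have c2: "\<And>i. i < n \<Longrightarrow> c2 i > 0" using mu a by (auto simp: c2_def)
  have P1: "(\<Prod>i<n. c1 i) = lam ^ (n - 1)" unfolding c1_def using prod_if_one[OF j] by simp
  have P2: "(\<Prod>i<n. c2 i) = mu ^ (n - 1) / a" unfolding c2_def using prod_if_one[OF j] by simp
  have sumD: "(\<Sum>i\<in>{..<n}-{j}. \<bar>(\<lambda>i\<in>{..<n}. c i * x i) i\<bar> powr p) = t powr p * (\<Sum>i\<in>{..<n}-{j}. \<bar>x i\<bar> powr p)"
    if "\<And>i. i \<noteq> j \<Longrightarrow> c i = t" "t > 0" for c :: "nat \<Rightarrow> real" and t x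
    using that by (auto simp: sum_distrib_left abs_mult powr_mult intro!: sum.cong)
  have sub1: "{x \<in> lpball n p. \<bar>x j\<bar> > m} \<subseteq> {x \<in> space ?M. (\<lambda>i\<in>{..<n}. c1 i * x i) \<in> Sj}"
  proof safe
    fix x assume x: "x \<in> lpball n p" "m < \<bar>x j\<bar>"
    then have xs: "x \<in> space ?M" and ps: "psum n p x \<le> 1" using p by (auto simp: lpball_eq)
    then show "x \<in> space ?M" by simp
    have xj: "\<bar>x j\<bar> \<le> 1"
    proof -
      have "\<bar>x j\<bar> powr p \<le> 1" using ps psum_split[OF j, of p x]
        by (smt (verit) sum_nonneg powr_ge_zero)
      then show ?thesis using p by (subst (asm) powr_le_one_iff) auto
    qed
    have mx: "m powr p < \<bar>x j\<bar> powr p" using x m p by (intro powr_less_mono2) auto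
    have rest: "(\<Sum>i\<in>{..<n}-{j}. \<bar>x i\<bar> powr p) \<le> 1 - m powr p"
      using ps psum_split[OF j, of p x] mx by linarith
    have "(\<Sum>i\<in>{..<n}-{j}. \<bar>(\<lambda>i\<in>{..<n}. c1 i * x i) i\<bar> powr p) = lam powr p * (\<Sum>i\<in>{..<n}-{j}. \<bar>x i\<bar> powr p)"
      using lam by (intro sumD) (auto simp: c1_def)
    also have "\<dots> \<le> lam powr p * (1 - m powr p)" using rest by (intro mult_left_mono) auto
    also have "\<dots> = 1" using lam m by simp
    finally show "(\<lambda>i\<in>{..<n}. c1 i * x i) \<in> Sj"
      using xj j by (auto simp: Sj_iff space_leb c1_def)
  qed
  have sub2: "{x \<in> space ?M. (\<lambda>i\<in>{..<n}. c2 i * x i) \<in> Sj} \<subseteq> lpball n p"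
  proof safe
    fix x assume xs: "x \<in> space ?M" and D: "(\<lambda>i\<in>{..<n}. c2 i * x i) \<in> Sj"
    have "\<bar>x j\<bar> / a \<le> 1" using D j a by (auto simp: Sj_iff c2_def abs_mult)
    then have "\<bar>x j\<bar> \<le> a" using a by simp
    then have xj: "\<bar>x j\<bar> powr p \<le> a powr p" using p by (intro powr_mono2) auto
    have "mu powr p * (\<Sum>i\<in>{..<n}-{j}. \<bar>x i\<bar> powr p) \<le> 1"
      using D sumD[of c2 mu x] mu by (auto simp: Sj_iff c2_def)
    then have rest: "(\<Sum>i\<in>{..<n}-{j}. \<bar>x i\<bar> powr p) \<le> 1 - a powr p"
      using mu a by (simp add: field_simps)
    have "psum n p x \<le> 1" using psum_split[OF j, of p x] xj rest by linarith
    then show "x \<in> lpball n p" using xs p by (simp add: lpball_eq)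
  qed
  have E1: "emeasure ?M Sj = ennreal (lam ^ (n - 1)) * emeasure ?M {x \<in> space ?M. (\<lambda>i\<in>{..<n}. c1 i * x i) \<in> Sj}"
    using scale_PiM[OF c1 Sj_sets] P1 by simp
  have E2: "emeasure ?M Sj = ennreal (mu ^ (n - 1) / a) * emeasure ?M {x \<in> space ?M. (\<lambda>i\<in>{..<n}. c2 i * x i) \<in> Sj}"
    using scale_PiM[OF c2 Sj_sets] P2 by simp
  have "ennreal (lam ^ (n - 1)) * emeasure ?M {x \<in> lpball n p. \<bar>x j\<bar> > m}
      \<le> ennreal (lam ^ (n - 1)) * emeasure ?M {x \<in> space ?M. (\<lambda>i\<in>{..<n}. c1 i * x i) \<in> Sj}"
    using sub1 by (intro mult_left_mono emeasure_mono pre_sets Sj_sets) auto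
  also have "\<dots> = ennreal (mu ^ (n - 1) / a) * emeasure ?M {x \<in> space ?M. (\<lambda>i\<in>{..<n}. c2 i * x i) \<in> Sj}"
    using E1 E2 by simp
  also have "\<dots> \<le> ennreal (mu ^ (n - 1) / a) * emeasure ?M (lpball n p)"
    using sub2 p by (intro mult_left_mono emeasure_mono lpball_sets) auto
  finally have ineq: "ennreal (lam ^ (n - 1)) * emeasure ?M {x \<in> lpball n p. \<bar>x j\<bar> > m}
      \<le> ennreal (mu ^ (n - 1) / a) * emeasure ?M (lpball n p)" .
  have "emeasure ?M {x \<in> lpball n p. \<bar>x j\<bar> > m}
      = ennreal (1 / lam ^ (n - 1)) * (ennreal (lam ^ (n - 1)) * emeasure ?M {x \<in> lpball n p. \<bar>x j\<bar> > m})"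
    using lam by (simp add: mult.assoc[symmetric] ennreal_mult[symmetric])
  also have "\<dots> \<le> ennreal (1 / lam ^ (n - 1)) * (ennreal (mu ^ (n - 1) / a) * emeasure ?M (lpball n p))"
    using ineq by (intro mult_left_mono) auto
  also have "\<dots> = ennreal ((mu / lam) ^ (n - 1) / a) * emeasure ?M (lpball n p)"
    using lam mu a by (simp add: mult.assoc[symmetric] ennreal_mult[symmetric] power_divide)
  finally have "emeasure ?M {x \<in> lpball n p. \<bar>x j\<bar> > m} \<le> ennreal ((mu / lam) ^ (n - 1) / a) * emeasure ?M (lpball n p)" .
  then show ?thesis unfolding lam_def mu_def using p a m
    by (intro meas_le lpball_fmeas) (auto simp: lam_def[symmetric] mu_def[symmetric] intro!: divide_nonneg_nonneg zero_le_power)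
qed

lemma tail_num:
  assumes p: "1 \<le> p" and n: "2 \<le> n" and u: "u = (2*p+2) * ln (real n) / (real n - 1)" "u < 1"
  shows "real n * (((1 - 1/real n) powr (-1/p)) / ((1 - u) powr (-1/p))) ^ (n - 1) / (real n powr (-1/p))
         \<le> exp 1 / real n"
proof -
  have n1: "real n - 1 > 0" "real n > 1" using n by auto
  have u0: "u \<ge> 0" using u n1 p by auto
  have b1: "1 - 1/real n > 0" using n1 by auto
  have b2: "1 - u > 0" using u by auto
  define S where "S = ln (real n) + real (n - 1) * ((-1/p) * ln (1 - 1/real n) - (-1/p) * ln (1 - u)) + ln (real n) / p"
  have eq: "real n * (((1 - 1/real n) powr (-1/p)) / ((1 - u) powr (-1/p))) ^ (n - 1) / (real n powr (-1/p)) = exp S"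
  proof -
    have "((1 - 1/real n) powr (-1/p)) / ((1 - u) powr (-1/p)) = exp ((-1/p) * ln (1 - 1/real n) - (-1/p) * ln (1 - u))"
    proof -
      have e1: "(1 - 1/real n) powr (-1/p) = exp ((-1/p) * ln (1 - 1/real n))"
        using b1 n unfolding powr_def by simp
      have e2: "(1 - u) powr (-1/p) = exp ((-1/p) * ln (1 - u))"
        using b2 unfolding powr_def by simp
      show ?thesis unfolding e1 e2 by (simp only: exp_diff)
    qed
    then have "(((1 - 1/real n) powr (-1/p)) / ((1 - u) powr (-1/p))) ^ (n - 1)
        = exp (real (n - 1) * ((-1/p) * ln (1 - 1/real n) - (-1/p) * ln (1 - u)))"
      by (simp add: exp_of_nat_mult)
    moreover have "real n = exp (ln (real n))" using n1 by simp
    moreover have "1 / (real n powr (-1/p)) = exp (ln (real n) / p)"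
      using n1 by (simp add: powr_def exp_minus field_simps)
    ultimately show ?thesis unfolding S_def
      by (simp add: exp_add divide_inverse mult.assoc del: exp_ln)
  qed
  have l1: "ln (1 - u) \<le> - u" using ln_le_minus_one[OF b2] by simp
  have l2: "- ln (1 - 1/real n) \<le> 1 / (real n - 1)"
  proof -
    have "1 - 1/real n = (real n - 1) / real n" using n1 by (simp add: field_simps)
    then have "- ln (1 - 1/real n) = ln (real n / (real n - 1))"
      using n1 by (simp add: ln_div)
    also have "\<dots> \<le> real n / (real n - 1) - 1" using n1 by (intro ln_le_minus_one) auto
    also have "\<dots> = 1 / (real n - 1)" using n1 by (simp add: field_simps)
    finally show ?thesis .
  qed
  have rn: "real (n - 1) = real n - 1" using n by auto
  have "real (n - 1) * (ln (1 - u) - ln (1 - 1/real n)) \<le> (real n - 1) * (- u + 1 / (real n - 1))"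
    unfolding rn using l1 l2 n1 by (intro mult_left_mono) auto
  also have "\<dots> = - (2*p+2) * ln (real n) + 1" using n1 u by (simp add: field_simps)
  finally have key: "real (n - 1) * (ln (1 - u) - ln (1 - 1/real n)) \<le> - (2*p+2) * ln (real n) + 1" .
  have Sx: "S = ln (real n) + (real (n - 1) * (ln (1 - u) - ln (1 - 1/real n))) / p + ln (real n) / p"
    unfolding S_def using p by (simp add: field_simps)
  have "S \<le> ln (real n) + (- (2*p+2) * ln (real n) + 1) / p + ln (real n) / p"
    unfolding Sx using key p by (simp add: divide_right_mono)
  also have "\<dots> = - ln (real n) - ln (real n) / p + 1 / p" using p by (simp add: field_simps)
  also have "\<dots> \<le> 1 - ln (real n)"
  proof -
    have "ln (real n) \<ge> 0" using n1 by simp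
    then show ?thesis using p by (simp add: field_simps)
  qed
  finally have "exp S \<le> exp (1 - ln (real n))" by simp
  also have "\<dots> = exp 1 / real n" using n1 by (simp add: exp_diff)
  finally show ?thesis using eq by simp
qed

lemma comp_meas: "j < n \<Longrightarrow> (\<lambda>x::nat\<Rightarrow>real. x j) \<in> borel_measurable (lebesgue_n n)"
  by measurable

lemma E_sets: "j < n \<Longrightarrow> 0 < p \<Longrightarrow> {x \<in> lpball n p. m < \<bar>x j\<bar>} \<in> sets (lebesgue_n n)"
proof -
  assume j: "j < n" and p: "0 < p"
  note [measurable] = comp_meas[OF j]
  have "{x \<in> lpball n p. m < \<bar>x j\<bar>} = {x \<in> space (lebesgue_n n). psum n p x \<le> 1 \<and> m < \<bar>x j\<bar>}"
    using p by (auto simp: lpball_eq)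
  also have "\<dots> \<in> sets (lebesgue_n n)" by measurable
  finally show ?thesis .
qed

lemma A0_sets: "0 < p \<Longrightarrow> {x \<in> lpball n p. psum n p x < c} \<in> sets (lebesgue_n n)"
proof -
  assume p: "0 < p"
  have "{x \<in> lpball n p. psum n p x < c} = {x \<in> space (lebesgue_n n). psum n p x \<le> 1 \<and> psum n p x < c}"
    using p by (auto simp: lpball_eq)
  also have "\<dots> \<in> sets (lebesgue_n n)" by measurable
  finally show ?thesis .
qed

lemma bad_bound:
  assumes p: "1 \<le> p" and n: "2 \<le> n" and r: "0 < \<rho>" and m: "0 < m" "m powr p < 1"
  shows "measure (lebesgue_n n) ({x \<in> lpball n p. psum n p x < \<rho> powr p} \<union> (\<Union>j<n. {x \<in> lpball n p. m < \<bar>x j\<bar>}))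
     \<le> (\<rho> ^ n + real n * ((((1 - 1/real n) powr (-1/p)) / ((1 - m powr p) powr (-1/p))) ^ (n - 1) / (real n powr (-1/p))))
        * measure (lebesgue_n n) (lpball n p)"
proof -
  let ?M = "lebesgue_n n"
  let ?V = "measure ?M (lpball n p)"
  define a where "a = real n powr (-1/p)"
  have a: "0 < a" "a powr p = 1 / real n" "a powr p < 1"
    using n p powr_inv_p[of "real n" p] by (auto simp: a_def)
  define T where "T = (((1 - a powr p) powr (-1/p)) / ((1 - m powr p) powr (-1/p))) ^ (n - 1) / a"
  have "measure ?M ({x \<in> lpball n p. psum n p x < \<rho> powr p} \<union> (\<Union>j<n. {x \<in> lpball n p. m < \<bar>x j\<bar>}))
      \<le> measure ?M {x \<in> lpball n p. psum n p x < \<rho> powr p} + measure ?M (\<Union>j<n. {x \<in> lpball n p. m < \<bar>x j\<bar>})"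
    using p by (intro measure_Un_le A0_sets sets.finite_UN E_sets) auto
  also have "measure ?M (\<Union>j<n. {x \<in> lpball n p. m < \<bar>x j\<bar>}) \<le> (\<Sum>j<n. measure ?M {x \<in> lpball n p. m < \<bar>x j\<bar>})"
    using p by (intro measure_UNION_le E_sets) auto
  also have "\<dots> \<le> (\<Sum>j<n. T * ?V)"
    using tail_bound[OF p _ m a(1) a(3)] by (intro sum_mono) (auto simp: T_def)
  also have "measure ?M {x \<in> lpball n p. psum n p x < \<rho> powr p} \<le> \<rho> ^ n * ?V"
    using shrink_bound[OF p r] .
  finally have "measure ?M ({x \<in> lpball n p. psum n p x < \<rho> powr p} \<union> (\<Union>j<n. {x \<in> lpball n p. m < \<bar>x j\<bar>}))
      \<le> (\<rho> ^ n + real n * T) * ?V" by (simp add: algebra_simps)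
  then show ?thesis unfolding T_def a(2) by (simp add: a_def)
qed

lemma psum_pow_bound:
  assumes b: "0 \<le> b" and m: "0 \<le> m" and x: "\<And>j. j < n \<Longrightarrow> \<bar>x j\<bar> \<le> m"
  shows "psum n (r + b) x \<le> m powr b * psum n r x"
  unfolding psum_def sum_distrib_left
proof (intro sum_mono)
  fix i assume i: "i \<in> {..<n}"
  show "\<bar>x i\<bar> powr (r + b) \<le> m powr b * \<bar>x i\<bar> powr r"
  proof (cases "x i = 0")
    case False
    have "\<bar>x i\<bar> powr (r + b) = \<bar>x i\<bar> powr b * \<bar>x i\<bar> powr r" using False by (simp add: powr_add)
    also have "\<dots> \<le> m powr b * \<bar>x i\<bar> powr r"
      using x[of i] i b by (intro mult_right_mono powr_mono2) auto
    finally show ?thesis .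
  qed simp
qed

lemma pm_psum:
  assumes "0 < a" "a \<le> b" "0 < n"
  shows "psum n a x \<le> real n powr (1 - a/b) * (psum n b x) powr (a/b)"
  using power_mean[of "{..<n}" a b "\<lambda>i. \<bar>x i\<bar>"] assms unfolding psum_def by simp

lemma claim_A:
  assumes p: "1 \<le> p" and q: "0 < q" and s: "0 < s" and n: "0 < n" and m: "0 < m"
    and x: "x \<in> lpball n p" and xm: "\<And>j. j < n \<Longrightarrow> \<bar>x j\<bar> \<le> m"
    and c1: "q \<ge> p \<Longrightarrow> (q - p) * ln m \<le> q * ln s"
    and c2: "q < p \<Longrightarrow> (1 - q/p) * ln (real n) \<le> q * ln s"
  shows "x \<in> scale_set n s (lpball n q)"
proof -
  have xs: "x \<in> space (lebesgue_n n)" and ps: "psum n p x \<le> 1" using x p by (auto simp: lpball_eq)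
  have "psum n q x \<le> s powr q"
  proof (cases "q \<ge> p")
    case True
    have "psum n q x = psum n (p + (q - p)) x" by simp
    also have "\<dots> \<le> m powr (q - p) * psum n p x" using True m xm by (intro psum_pow_bound) auto
    also have "\<dots> \<le> m powr (q - p) * 1" using ps by (intro mult_left_mono) auto
    also have "\<dots> = exp ((q - p) * ln m)" using m by (simp add: powr_def)
    also have "\<dots> \<le> exp (q * ln s)" using c1 True by simp
    also have "\<dots> = s powr q" using s by (simp add: powr_def)
    finally show ?thesis .
  next
    case False
    have "psum n q x \<le> real n powr (1 - q/p) * (psum n p x) powr (q/p)"
      using False q n by (intro pm_psum) auto
    also have "\<dots> \<le> real n powr (1 - q/p) * 1"
      using ps psum_nonneg[of n p x] q p by (intro mult_left_mono) (auto simp: powr_le_one_iff)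
    also have "\<dots> = exp ((1 - q/p) * ln (real n))" using n by (simp add: powr_def)
    also have "\<dots> \<le> exp (q * ln s)" using c2 False by simp
    also have "\<dots> = s powr q" using s by (simp add: powr_def)
    finally show ?thesis .
  qed
  then show ?thesis using scale_eq[OF s q, of n] xs by auto
qed

lemma claim_B:
  assumes p: "1 \<le> p" and q: "0 < q" and s: "0 \<le> s" and n: "0 < n" and m: "0 < m" and r: "0 < \<rho>"
    and x: "x \<in> lpball n p" and xr: "\<rho> powr p \<le> psum n p x" and xm: "\<And>j. j < n \<Longrightarrow> \<bar>x j\<bar> \<le> m"
    and c1: "0 < s \<Longrightarrow> q \<ge> p \<Longrightarrow> (1 - p/q) * ln (real n) + p * ln s < p * ln \<rho>"
    and c2: "0 < s \<Longrightarrow> q < p \<Longrightarrow> (p - q) * ln m + q * ln s < p * ln \<rho>"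
  shows "x \<notin> scale_set n s (lpball n q)"
proof
  assume xS: "x \<in> scale_set n s (lpball n q)"
  have pq: "psum n q x \<le> s powr q" using scale_mem[OF s q xS] by simp
  have rp: "\<rho> powr p = exp (p * ln \<rho>)" using r by (simp add: powr_def)
  show False
  proof (cases "s = 0")
    case True
    then have "psum n q x = 0" using pq psum_nonneg[of n q x] by simp
    then have "\<forall>i\<in>{..<n}. \<bar>x i\<bar> powr q = 0"
      unfolding psum_def by (subst sum_nonneg_eq_0_iff[symmetric]) auto
    then have "psum n p x = 0" unfolding psum_def by simp
    then show False using xr r by simp
  next
    case False
    then have s': "0 < s" using s by simp
    show False
    proof (cases "q \<ge> p")
      case True
      have "psum n p x \<le> real n powr (1 - p/q) * (psum n q x) powr (p/q)"
        using True p n by (intro pm_psum) auto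
      also have "\<dots> \<le> real n powr (1 - p/q) * (s powr q) powr (p/q)"
        using pq psum_nonneg[of n q x] p q by (intro mult_left_mono powr_mono2) auto
      also have "(s powr q) powr (p/q) = s powr p" using q by (simp add: powr_powr)
      also have "real n powr (1 - p/q) * s powr p = exp ((1 - p/q) * ln (real n) + p * ln s)"
        using n s' by (simp add: powr_def exp_add)
      also have "\<dots> < \<rho> powr p" unfolding rp using c1[OF s' True] by simp
      finally show False using xr by simp
    next
      case False
      have "psum n p x = psum n (q + (p - q)) x" by simp
      also have "\<dots> \<le> m powr (p - q) * psum n q x" using False m xm by (intro psum_pow_bound) auto
      also have "\<dots> \<le> m powr (p - q) * s powr q" using pq by (intro mult_left_mono) auto
      also have "\<dots> = exp ((p - q) * ln m + q * ln s)" using m s' by (simp add: powr_def exp_add)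
      also have "\<dots> < \<rho> powr p" unfolding rp using c2[OF s'] False by simp
      finally show False using xr by simp
    qed
  qed
qed

lemma index_limits:
  fixes p \<alpha> s :: real and \<epsilon> q :: "nat \<Rightarrow> real"
  assumes p: "1 \<le> p" and qd: "\<And>n. q n = p + (\<alpha> + \<epsilon> n) / ln (real n)" and eps: "\<epsilon> \<longlonglongrightarrow> 0"
  defines "m \<equiv> \<lambda>n::nat. ((2*p+2) * ln (real n) / (real n - 1)) powr (1/p)"
    and "\<rho> \<equiv> \<lambda>n::nat. exp (- 1 / sqrt (real n))"
  shows "s > exp (- \<alpha> / p\<^sup>2) \<Longrightarrow> eventually (\<lambda>n. (q n \<ge> p \<longrightarrow> (q n - p) * ln (m n) \<le> q n * ln s)
            \<and> (q n < p \<longrightarrow> (1 - q n / p) * ln (real n) \<le> q n * ln s)) sequentially"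
    and "0 < s \<Longrightarrow> s < exp (- \<alpha> / p\<^sup>2) \<Longrightarrow> eventually (\<lambda>n. (q n \<ge> p \<longrightarrow> (1 - p / q n) * ln (real n) + p * ln s < p * ln (\<rho> n))
            \<and> (q n < p \<longrightarrow> (p - q n) * ln (m n) + q n * ln s < p * ln (\<rho> n))) sequentially"
proof -
  have p0: "p > 0" using p by simp
  define a where "a n = \<alpha> + \<epsilon> n" for n
  have a: "a \<longlonglongrightarrow> \<alpha>" unfolding a_def using tendsto_add[OF tendsto_const eps] by simp
  have ev2: "eventually (\<lambda>n::nat. n \<ge> 3) sequentially" by (rule eventually_ge_at_top)
  have Lm: "(\<lambda>n. ln (m n) / ln (real n)) \<longlonglongrightarrow> -1/p"
  proof -
    have l1: "(\<lambda>n::nat. ln (2*p+2) / ln (real n)) \<longlonglongrightarrow> 0" by real_asymp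
    have l2: "(\<lambda>n::nat. (ln (ln (real n)) - ln (real n - 1)) / ln (real n)) \<longlonglongrightarrow> -1" by real_asymp
    have l3: "(\<lambda>n. (1/p) * (ln (2*p+2) / ln (real n) + (ln (ln (real n)) - ln (real n - 1)) / ln (real n))) \<longlonglongrightarrow> (1/p) * (0 + -1)"
      by (intro tendsto_intros l1 l2)
    have eq: "eventually (\<lambda>n. (1/p) * (ln (2*p+2) / ln (real n) + (ln (ln (real n)) - ln (real n - 1)) / ln (real n)) = ln (m n) / ln (real n)) sequentially"
      using ev2
    proof eventually_elim
      case (elim n)
      have n: "real n \<ge> 3" using elim by simp
      have lnpos: "ln (real n) > 0" using n by simp
      have u: "(2*p+2) * ln (real n) / (real n - 1) > 0" using n p lnpos by auto
      have "ln (m n) = (1/p) * ln ((2*p+2) * ln (real n) / (real n - 1))"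
        unfolding m_def using u by (simp add: ln_powr)
      also have "ln ((2*p+2) * ln (real n) / (real n - 1)) = ln (2*p+2) + ln (ln (real n)) - ln (real n - 1)"
        using n p lnpos by (simp add: ln_div ln_mult)
      finally have "ln (m n) / ln (real n) = (1/p) * ((ln (2*p+2) + (ln (ln (real n)) - ln (real n - 1))) / ln (real n))"
        by (simp add: algebra_simps)
      then show ?case by (simp add: add_divide_distrib)
    qed
    show ?thesis using Lim_transform_eventually[OF l3 eq] by simp
  qed
  have invln: "(\<lambda>n::nat. 1 / ln (real n)) \<longlonglongrightarrow> 0" by real_asymp
  have qlim: "q \<longlonglongrightarrow> p"
  proof -
    have "(\<lambda>n. p + a n * (1 / ln (real n))) \<longlonglongrightarrow> p + \<alpha> * 0"
      by (intro tendsto_intros a invln)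
    then show ?thesis unfolding qd a_def by simp
  qed
  have ev_q: "eventually (\<lambda>n. q n - p = a n / ln (real n) \<and> ln (real n) > 0) sequentially"
    using ev2 by eventually_elim (auto simp: qd a_def)
  have T1: "(\<lambda>n. (q n - p) * ln (m n)) \<longlonglongrightarrow> \<alpha> * (-1/p)"
  proof -
    have "(\<lambda>n. a n * (ln (m n) / ln (real n))) \<longlonglongrightarrow> \<alpha> * (-1/p)" by (intro tendsto_intros a Lm)
    moreover have "eventually (\<lambda>n. a n * (ln (m n) / ln (real n)) = (q n - p) * ln (m n)) sequentially"
      using ev_q by eventually_elim auto
    ultimately show ?thesis by (rule Lim_transform_eventually)
  qed
  have T2: "(\<lambda>n. (1 - q n / p) * ln (real n)) \<longlonglongrightarrow> - \<alpha> / p"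
  proof -
    have "(\<lambda>n. - a n / p) \<longlonglongrightarrow> - \<alpha> / p" using p0 by (intro tendsto_intros a) auto
    moreover have "eventually (\<lambda>n. - a n / p = (1 - q n / p) * ln (real n)) sequentially"
      using ev_q by eventually_elim (use p0 in \<open>auto simp: field_simps\<close>)
    ultimately show ?thesis by (rule Lim_transform_eventually)
  qed
  have T3: "(\<lambda>n. (1 - p / q n) * ln (real n)) \<longlonglongrightarrow> \<alpha> / p"
  proof -
    have "(\<lambda>n. a n / q n) \<longlonglongrightarrow> \<alpha> / p" using p0 by (intro tendsto_intros a qlim) auto
    moreover have "eventually (\<lambda>n. q n > 0) sequentially" using qlim p0 by (rule order_tendstoD)
    then have "eventually (\<lambda>n. a n / q n = (1 - p / q n) * ln (real n)) sequentially"
      using ev_q by eventually_elim (auto simp: field_simps)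
    ultimately show ?thesis by (rule Lim_transform_eventually)
  qed
  have T4: "(\<lambda>n. q n * ln s) \<longlonglongrightarrow> p * ln s" by (intro tendsto_intros qlim)
  have T5: "(\<lambda>n. p * ln (\<rho> n)) \<longlonglongrightarrow> 0"
  proof -
    have "(\<lambda>n::nat. p * (- 1 / sqrt (real n))) \<longlonglongrightarrow> p * 0" by (intro tendsto_intros) real_asymp
    then show ?thesis unfolding \<rho>_def by simp
  qed
  show "eventually (\<lambda>n. (q n \<ge> p \<longrightarrow> (q n - p) * ln (m n) \<le> q n * ln s)
            \<and> (q n < p \<longrightarrow> (1 - q n / p) * ln (real n) \<le> q n * ln s)) sequentially"
    if s: "s > exp (- \<alpha> / p\<^sup>2)"
  proof -
    have sp: "s > 0" using s by (smt (verit) exp_gt_zero)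
    have "ln s > - \<alpha> / p\<^sup>2" using s sp by (metis ln_exp ln_less_cancel_iff exp_gt_zero)
    then have neg: "- \<alpha> / p - p * ln s < 0" using p0
      by (simp add: field_simps power2_eq_square)
    have e1: "eventually (\<lambda>n. (q n - p) * ln (m n) - q n * ln s < 0) sequentially"
      using tendsto_diff[OF T1 T4] neg by (intro order_tendstoD) auto
    have e2: "eventually (\<lambda>n. (1 - q n / p) * ln (real n) - q n * ln s < 0) sequentially"
      using tendsto_diff[OF T2 T4] neg by (intro order_tendstoD) auto
    from e1 e2 show ?thesis by eventually_elim auto
  qed
  show "eventually (\<lambda>n. (q n \<ge> p \<longrightarrow> (1 - p / q n) * ln (real n) + p * ln s < p * ln (\<rho> n))
            \<and> (q n < p \<longrightarrow> (p - q n) * ln (m n) + q n * ln s < p * ln (\<rho> n))) sequentially"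
    if sp: "0 < s" and s: "s < exp (- \<alpha> / p\<^sup>2)"
  proof -
    have "ln s < - \<alpha> / p\<^sup>2" using s sp by (metis ln_exp ln_less_cancel_iff exp_gt_zero)
    then have neg: "\<alpha> / p + p * ln s < 0" using p0
      by (simp add: field_simps power2_eq_square)
    have T1': "(\<lambda>n. (p - q n) * ln (m n)) \<longlonglongrightarrow> \<alpha> / p"
      using tendsto_minus[OF T1] by (simp add: algebra_simps)
    have e1: "eventually (\<lambda>n. (1 - p / q n) * ln (real n) + p * ln s - p * ln (\<rho> n) < 0) sequentially"
      using tendsto_diff[OF tendsto_add[OF T3 tendsto_const[of "p * ln s"]] T5] neg
      by (intro order_tendstoD) auto
    have e2: "eventually (\<lambda>n. (p - q n) * ln (m n) + q n * ln s - p * ln (\<rho> n) < 0) sequentially"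
      using tendsto_diff[OF tendsto_add[OF T1' T4] T5] neg by (intro order_tendstoD) auto
    from e1 e2 show ?thesis by eventually_elim auto
  qed
qed

lemma meas_sub_le: "A \<subseteq> B \<Longrightarrow> B \<in> fmeasurable M \<Longrightarrow> measure M A \<le> measure M B"
  by (cases "A \<in> sets M") (auto intro: measure_mono_fmeasurable simp: measure_notin_sets)

theorem proposition2p4:
  fixes d :: nat and p :: real
    and \<alpha> :: "nat \<Rightarrow> real" and \<epsilon> :: "nat \<Rightarrow> nat \<Rightarrow> real"
    and q :: "nat \<Rightarrow> nat \<Rightarrow> real" and s :: "nat \<Rightarrow> real"
  assumes p: "1 \<le> p"
    and q_def: "\<And>i n. i < d \<Longrightarrow> q i n = p + (\<alpha> i + \<epsilon> i n) / ln (real n)"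
    and eps: "\<And>i. i < d \<Longrightarrow> \<epsilon> i \<longlonglongrightarrow> 0"
    and q_ge: "\<And>i n. i < d \<Longrightarrow> n \<ge> 2 \<Longrightarrow> q i n \<ge> 1"
    and s_nonneg: "\<And>i. i < d \<Longrightarrow> s i \<ge> 0"
  defines "Igt \<equiv> {i. i < d \<and> s i > exp (- \<alpha> i / p\<^sup>2)}"
    and "Ilt \<equiv> {i. i < d \<and> s i < exp (- \<alpha> i / p\<^sup>2)}"
  shows "(card Igt = d \<longrightarrow>
           ((\<lambda>n. voln n (lpball n p \<inter> (\<Inter>i\<in>{..<d}. scale_set n (s i) (lpball n (q i n))))
                  / voln n (lpball n p)) \<longlonglongrightarrow> 1))
       \<and> (card Ilt \<ge> 1 \<longrightarrow>
           ((\<lambda>n. voln n (lpball n p \<inter> (\<Inter>i\<in>{..<d}. scale_set n (s i) (lpball n (q i n))))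
                  / voln n (lpball n p)) \<longlonglongrightarrow> 0))"
proof -
  define m where "m = (\<lambda>n::nat. ((2*p+2) * ln (real n) / (real n - 1)) powr (1/p))"
  define \<rho> where "\<rho> = (\<lambda>n::nat. exp (- 1 / sqrt (real n)))"
  define V where "V n = measure (lebesgue_n n) (lpball n p)" for n
  define X where "X n = lpball n p \<inter> (\<Inter>i\<in>{..<d}. scale_set n (s i) (lpball n (q i n)))" for n
  define Bad where "Bad n = {x \<in> lpball n p. psum n p x < \<rho> n powr p} \<union> (\<Union>j<n. {x \<in> lpball n p. m n < \<bar>x j\<bar>})" for n
  define g where "g n = \<rho> n ^ n + exp 1 / real n" for n
  have p0: "0 < p" using p by simp
  have BadL: "Bad n \<subseteq> lpball n p" for n unfolding Bad_def by auto
  have Vpos: "V n > 0" for n unfolding V_def using lpball_pos[OF p] .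
  have R_eq: "(\<lambda>n. voln n (lpball n p \<inter> (\<Inter>i\<in>{..<d}. scale_set n (s i) (lpball n (q i n)))) / voln n (lpball n p))
      = (\<lambda>n. measure (lebesgue_n n) (X n) / V n)"
    by (simp add: voln_def X_def V_def)
  have glim: "g \<longlonglongrightarrow> 0"
  proof -
    have "(\<lambda>n::nat. exp (real n * (- 1 / sqrt (real n))) + exp 1 / real n) \<longlonglongrightarrow> 0" by real_asymp
    moreover have "g = (\<lambda>n::nat. exp (real n * (- 1 / sqrt (real n))) + exp 1 / real n)"
      unfolding g_def \<rho>_def by (simp only: exp_of_nat_mult)
    ultimately show ?thesis by simp
  qed
  have ulim: "(\<lambda>n::nat. (2*p+2) * ln (real n) / (real n - 1)) \<longlonglongrightarrow> 0" by real_asymp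
  have ev_u: "eventually (\<lambda>n. (2*p+2) * ln (real n) / (real n - 1) < 1) sequentially"
    using ulim by (rule order_tendstoD) simp
  have ev_bad: "eventually (\<lambda>n. Bad n \<in> sets (lebesgue_n n) \<and> measure (lebesgue_n n) (Bad n) \<le> g n * V n) sequentially"
    using ev_u eventually_ge_at_top[of 3]
  proof eventually_elim
    case (elim n)
    define u where "u = (2*p+2) * ln (real n) / (real n - 1)"
    have n: "2 \<le> n" "real n \<ge> 3" using elim by auto
    have u0: "0 < u" using n p unfolding u_def by (auto intro!: divide_pos_pos mult_pos_pos)
    have mp: "m n powr p = u" unfolding m_def u_def[symmetric] using u0 p0 by (simp add: powr_powr)
    have m0: "0 < m n" unfolding m_def u_def[symmetric] using u0 by (subst powr_gt_zero) linarith
    have u1: "u < 1" using elim unfolding u_def by simp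
    have sets: "Bad n \<in> sets (lebesgue_n n)" unfolding Bad_def
      using p0 by (intro sets.Un A0_sets sets.finite_UN E_sets) auto
    have "measure (lebesgue_n n) (Bad n) \<le> (\<rho> n ^ n + real n * ((((1 - 1/real n) powr (-1/p)) / ((1 - m n powr p) powr (-1/p))) ^ (n - 1) / (real n powr (-1/p)))) * V n"
      unfolding Bad_def V_def using bad_bound[OF p n(1) _ m0] mp u1 by (simp add: \<rho>_def)
    also have "real n * ((((1 - 1/real n) powr (-1/p)) / ((1 - m n powr p) powr (-1/p))) ^ (n - 1) / (real n powr (-1/p)))
        \<le> exp 1 / real n"
      using tail_num[OF p n(1) u_def u1] unfolding mp by simp
    finally have "measure (lebesgue_n n) (Bad n) \<le> (\<rho> n ^ n + exp 1 / real n) * V n"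
      using Vpos[of n] by (simp add: mult_right_mono)
    then show ?case using sets by (simp add: g_def)
  qed
  have good: "x \<in> lpball n p \<Longrightarrow> x \<notin> Bad n \<Longrightarrow> \<rho> n powr p \<le> psum n p x \<and> (\<forall>j<n. \<bar>x j\<bar> \<le> m n)" for x n
    unfolding Bad_def by (auto simp: not_less)
  have mpos: "eventually (\<lambda>n. 0 < m n) sequentially"
    using eventually_ge_at_top[of 2]
  proof eventually_elim
    case (elim n)
    then have "0 < (2*p+2) * ln (real n) / (real n - 1)" using p by (auto intro!: divide_pos_pos mult_pos_pos)
    then show ?case unfolding m_def by (subst powr_gt_zero) linarith
  qed
  show ?thesis
  proof (intro conjI impI)
    assume cd: "card Igt = d"
    have Igt: "Igt = {..<d}"
      using cd by (intro card_subset_eq) (auto simp: Igt_def)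
    then have sgt: "\<And>i. i < d \<Longrightarrow> s i > exp (- \<alpha> i / p\<^sup>2)" unfolding Igt_def by auto
    have evA: "eventually (\<lambda>n. \<forall>i\<in>{..<d}. (q i n \<ge> p \<longrightarrow> (q i n - p) * ln (m n) \<le> q i n * ln (s i))
            \<and> (q i n < p \<longrightarrow> (1 - q i n / p) * ln (real n) \<le> q i n * ln (s i))) sequentially"
    proof (intro eventually_ball_finite ballI)
      fix i assume "i \<in> {..<d}"
      then have i: "i < d" by simp
      show "eventually (\<lambda>n. (q i n \<ge> p \<longrightarrow> (q i n - p) * ln (m n) \<le> q i n * ln (s i))
            \<and> (q i n < p \<longrightarrow> (1 - q i n / p) * ln (real n) \<le> q i n * ln (s i))) sequentially"
        using index_limits(1)[OF p q_def[OF i] eps[OF i] sgt[OF i]] unfolding m_def by simp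
    qed simp
    have Xsub: "eventually (\<lambda>n. lpball n p - Bad n \<subseteq> X n \<and> X n \<in> sets (lebesgue_n n)) sequentially"
      using evA mpos eventually_ge_at_top[of 2]
    proof eventually_elim
      case (elim n)
      have qpos: "\<And>i. i < d \<Longrightarrow> 0 < q i n" using q_ge elim by (smt (verit))
      have spos: "\<And>i. i < d \<Longrightarrow> 0 < s i" using sgt by (smt (verit) exp_gt_zero)
      have "lpball n p - Bad n \<subseteq> X n"
      proof
        fix x assume x: "x \<in> lpball n p - Bad n"
        have gx: "\<forall>j<n. \<bar>x j\<bar> \<le> m n" using good[of x n] x by auto
        have "x \<in> scale_set n (s i) (lpball n (q i n))" if i: "i < d" for i
          using elim i gx x by (intro claim_A[OF p qpos[OF i] spos[OF i]]) auto
        then show "x \<in> X n" using x by (auto simp: X_def)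
      qed
      moreover have "X n = {x \<in> space (lebesgue_n n). psum n p x \<le> 1 \<and> (\<forall>i\<in>{..<d}. psum n (q i n) x \<le> s i powr q i n)}"
      proof -
        have "(\<Inter>i\<in>{..<d}. scale_set n (s i) (lpball n (q i n))) = (\<Inter>i\<in>{..<d}. {x \<in> space (lebesgue_n n). psum n (q i n) x \<le> s i powr q i n})"
          using scale_eq qpos spos by (intro INF_cong) auto
        then show ?thesis unfolding X_def using p0 by (auto simp: lpball_eq[OF p0])
      qed
      moreover have "{x \<in> space (lebesgue_n n). psum n p x \<le> 1 \<and> (\<forall>i\<in>{..<d}. psum n (q i n) x \<le> s i powr q i n)} \<in> sets (lebesgue_n n)"
        by measurable
      ultimately show ?case by simp
    qed
    have lo: "eventually (\<lambda>n. 1 - g n \<le> measure (lebesgue_n n) (X n) / V n) sequentially"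
      using Xsub ev_bad
    proof eventually_elim
      case (elim n)
      have "V n - measure (lebesgue_n n) (Bad n) \<le> measure (lebesgue_n n) (lpball n p - Bad n)"
      proof -
        have "Bad n \<subseteq> lpball n p" unfolding Bad_def by auto
        then have "measure (lebesgue_n n) (lpball n p - Bad n) = V n - measure (lebesgue_n n) (Bad n)"
          unfolding V_def using elim lpball_fmeas[OF p, of n] by (intro measure_Diff) (auto simp: fmeasurable_def)
        then show ?thesis by simp
      qed
      also have "\<dots> \<le> measure (lebesgue_n n) (X n)"
        using elim lpball_fmeas[OF p] by (intro measure_mono_fmeasurable) (auto intro: fmeasurableI2[of "lpball n p"] simp: X_def)
      finally have "(1 - g n) * V n \<le> measure (lebesgue_n n) (X n)" using elim by (simp add: algebra_simps)
      then show ?case using Vpos[of n] by (simp add: field_simps)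
    qed
    have hi: "eventually (\<lambda>n. measure (lebesgue_n n) (X n) / V n \<le> 1) sequentially"
    proof (intro always_eventually allI)
      fix n
      have "measure (lebesgue_n n) (X n) \<le> V n"
        unfolding V_def X_def using lpball_fmeas[OF p] by (intro meas_sub_le) auto
      then show "measure (lebesgue_n n) (X n) / V n \<le> 1" using Vpos[of n] by simp
    qed
    have f1: "(\<lambda>n. 1 - g n) \<longlonglongrightarrow> 1" using tendsto_diff[OF tendsto_const glim, of 1] by simp
    have "(\<lambda>n. measure (lebesgue_n n) (X n) / V n) \<longlonglongrightarrow> 1"
      by (rule tendsto_sandwich[OF lo hi f1 tendsto_const])
    then show "(\<lambda>n. voln n (lpball n p \<inter> (\<Inter>i\<in>{..<d}. scale_set n (s i) (lpball n (q i n)))) / voln n (lpball n p)) \<longlonglongrightarrow> 1"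
      unfolding R_eq .
  next
    assume "1 \<le> card Ilt"
    then obtain i0 where "i0 \<in> Ilt" by (metis card.empty ex_in_conv not_one_le_zero)
    then have i0: "i0 < d" "s i0 < exp (- \<alpha> i0 / p\<^sup>2)" unfolding Ilt_def by auto
    have evB: "eventually (\<lambda>n. 0 < s i0 \<longrightarrow> ((q i0 n \<ge> p \<longrightarrow> (1 - p / q i0 n) * ln (real n) + p * ln (s i0) < p * ln (\<rho> n))
            \<and> (q i0 n < p \<longrightarrow> (p - q i0 n) * ln (m n) + q i0 n * ln (s i0) < p * ln (\<rho> n)))) sequentially"
    proof (cases "0 < s i0")
      case True
      show ?thesis using index_limits(2)[OF p q_def[OF i0(1)] eps[OF i0(1)] True i0(2)]
        by (simp add: m_def \<rho>_def)
    qed simp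
    have Xsub: "eventually (\<lambda>n. X n \<subseteq> Bad n) sequentially"
      using evB mpos eventually_ge_at_top[of 2]
    proof eventually_elim
      case (elim n)
      show ?case
      proof
        fix x assume x: "x \<in> X n"
        show "x \<in> Bad n"
        proof (rule ccontr)
          assume nb: "x \<notin> Bad n"
          have xb: "x \<in> lpball n p" using x by (simp add: X_def)
          have xs: "x \<in> scale_set n (s i0) (lpball n (q i0 n))" using x i0 by (simp add: X_def)
          have rpos: "0 < \<rho> n" by (simp add: \<rho>_def)
          have "x \<notin> scale_set n (s i0) (lpball n (q i0 n))"
            using good[OF xb nb] elim q_ge[OF i0(1), of n] s_nonneg[OF i0(1)]
            by (intro claim_B[where \<rho>="\<rho> n" and m="m n", OF p _ _ _ _ rpos xb]) auto
          then show False using xs by simp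
        qed
      qed
    qed
    have hi: "eventually (\<lambda>n. measure (lebesgue_n n) (X n) / V n \<le> g n) sequentially"
      using Xsub ev_bad
    proof eventually_elim
      case (elim n)
      have "measure (lebesgue_n n) (X n) \<le> measure (lebesgue_n n) (Bad n)"
        using elim by (intro meas_sub_le fmeasurableI2[OF lpball_fmeas[OF p] BadL]) auto
      also have "\<dots> \<le> g n * V n" using elim by simp
      finally show ?case using Vpos[of n] by (simp add: field_simps)
    qed
    have lo: "eventually (\<lambda>n. 0 \<le> measure (lebesgue_n n) (X n) / V n) sequentially"
      using Vpos by (intro always_eventually allI) (simp add: less_imp_le)
    have "(\<lambda>n. measure (lebesgue_n n) (X n) / V n) \<longlonglongrightarrow> 0"
      by (rule tendsto_sandwich[OF lo hi tendsto_const glim])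
    then show "(\<lambda>n. voln n (lpball n p \<inter> (\<Inter>i\<in>{..<d}. scale_set n (s i) (lpball n (q i n)))) / voln n (lpball n p)) \<longlonglongrightarrow> 0"
      unfolding R_eq .
  qed
qed

end
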